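(* Let $\mathcal A$ be a weighted ODCA over $\mathbb F$, $K=|Q|\cdot|C|$, $c$ a configuration, $V\subseteq\mathbb F^{|Q|}$ a subspace, $S\subseteq C$ and $X\subseteq\mathbb N$. If $z$ is a minimal witness for $(c,\overline V,S,X)$ and exactly $t$ distinct counter values occur in the run of $z$ from $c$, then $|z|\le t\cdot K$.
   Context: Fix a field $\mathbb{F}$ and a finite alphabet $\Sigma$. For $n\in\mathbb N$ let $\mathrm{sgn}(n)=0$ if $n=0$ and $1$ if $n>0$. A weighted ODCA is $\mathcal{A}=((C,\delta_0,\delta_1,p_0),(Q,\lambda,\Delta,\eta))$ where $C$ is a finite nonempty set of counter states, $\delta_0:C\times\Sigma\to C\times\{0,+1\}$ and $\delta_1:C\times\Sigma\to C\times\{-1,0,+1\}$ are deterministic counter transition functions, $p_0\in C$, $Q$ is a finite nonempty set of states, $\lambda,\eta\in\mathbb{F}^{|Q|}$, and $\Delta:\Sigma\times\{0,1\}\to\mathbb{F}^{|Q|\times|Q|}$. A configuration is a triple $(x,p,n)\in\mathbb{F}^{|Q|}\times C\times\mathbb{N}$ (weight vector, counter state, counter value). Reading $a\in\Sigma$ from $(x,p,n)$ with $d=\mathrm{sgn}(n)$ and $\delta_d(p,a)=(p',e)$ leads to $(x\Delta(a,d),p',n+e)$; for each word $w$ and configuration $c$ there is a unique run of $w$ from $c$. For a subspace $V\subseteq\mathbb F^{|Q|}$ let $\overline V=\mathbb F^{|Q|}\setminus V$. For $S\subseteq C$ and $X\subseteq\mathbb N$, a word $z$ is a witness for $(c,\overline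 V,S,X)$ if the run of $z$ from $c$ ends in a configuration $(x,p,n)$ with $x\in\overline V$, $p\in S$, $n\in X$; it is a minimal witness if no strictly shorter word is a witness. *)

theory Defs
  imports "HOL-Analysis.Analysis"
begin

text \<open>Counter states: finite type 'c; alphabet: finite type 'a;
  states Q: finite type 'q; weight vectors are 'f^'q (row vectors), transition
  matrices 'f^'q^'q.\<close>

record ('c, 'a, 'q, 'f) wodca =
  delta0 :: "'c \<Rightarrow> 'a \<Rightarrow> 'c \<times> int"
  delta1 :: "'c \<Rightarrow> 'a \<Rightarrow> 'c \<times> int"
  p0 :: 'c
  lam :: "'f ^ 'q"
  Delta :: "'a \<Rightarrow> nat \<Rightarrow> 'f ^ 'q ^ 'q"
  eta :: "'f ^ 'q"

definition wf_wodca :: "('c, 'a, 'q::finite, 'f) wodca \<Rightarrow> bool" where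
  "wf_wodca A \<longleftrightarrow>
     (\<forall>p a. snd (delta0 A p a) \<in> {0, 1}) \<and>
     (\<forall>p a. snd (delta1 A p a) \<in> {-1, 0, 1})"

definition sgn_nat :: "nat \<Rightarrow> nat" where
  "sgn_nat n = (if n = 0 then 0 else 1)"

type_synonym ('f, 'q, 'c) config = "('f ^ 'q) \<times> 'c \<times> nat"

definition step :: "('c, 'a, 'q, 'f::field) wodca \<Rightarrow> ('f, 'q::finite, 'c) config \<Rightarrow> 'a
                     \<Rightarrow> ('f, 'q, 'c) config" where
  "step A cfg a = (case cfg of (x, p, n) \<Rightarrow>
     (let d = sgn_nat n;
          pe = (if d = 0 then delta0 A p a else delta1 A p a)
      in (x v* Delta A a d, fst pe, nat (int n + snd pe))))"

fun run :: "('c, 'a, 'q, 'f::field) wodca \<Rightarrow> ('f, 'q::finite, 'c) config \<Rightarrow> 'a list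
             \<Rightarrow> ('f, 'q, 'c) config list" where
  "run A c [] = [c]"
| "run A c (a # w) = c # run A (step A c a) w"

definition final_config :: "('c, 'a, 'q, 'f::field) wodca \<Rightarrow> ('f, 'q::finite, 'c) config
                             \<Rightarrow> 'a list \<Rightarrow> ('f, 'q, 'c) config" where
  "final_config A c w = last (run A c w)"

definition witness :: "('c, 'a, 'q, 'f::field) wodca \<Rightarrow> ('f, 'q::finite, 'c) config
    \<Rightarrow> ('f ^ 'q) set \<Rightarrow> 'c set \<Rightarrow> nat set \<Rightarrow> 'a list \<Rightarrow> bool" where
  "witness A c V S X z = (case final_config A c z of (x, p, n) \<Rightarrow>
      x \<in> UNIV - V \<and> p \<in> S \<and> n \<in> X)"

definition minimal_witness :: "('c, 'a, 'q, 'f::field) wodca \<Rightarrow> ('f, 'q::finite, 'c) config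
    \<Rightarrow> ('f ^ 'q) set \<Rightarrow> 'c set \<Rightarrow> nat set \<Rightarrow> 'a list \<Rightarrow> bool" where
  "minimal_witness A c V S X z \<longleftrightarrow> witness A c V S X z \<and>
      (\<forall>z'. length z' < length z \<longrightarrow> \<not> witness A c V S X z')"

definition counter_values :: "('c, 'a, 'q, 'f::field) wodca \<Rightarrow> ('f, 'q::finite, 'c) config
    \<Rightarrow> 'a list \<Rightarrow> nat set" where
  "counter_values A c z = (\<lambda>(x, p, n). n) ` set (run A c z)"

end

theory Submission
  imports Defs
begin

fun mat_of :: "('c, 'a, 'q, 'f::field) wodca \<Rightarrow> 'c \<Rightarrow> nat \<Rightarrow> 'a list \<Rightarrow> 'f ^ 'q ^ 'q" where
  "mat_of A p n [] = mat 1"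
| "mat_of A p n (a # w) = (let d = sgn_nat n;
          pe = (if d = 0 then delta0 A p a else delta1 A p a)
      in Delta A a d ** mat_of A (fst pe) (nat (int n + snd pe)) w)"

lemma fc_nil[simp]: "final_config A c [] = c"
  by (simp add: final_config_def)

lemma run_nonempty[simp]: "run A c w \<noteq> []"
  by (cases w) auto

lemma fc_cons[simp]: "final_config A c (a # w) = final_config A (step A c a) w"
  by (simp add: final_config_def)

lemma fc_append: "final_config A c (u @ w) = final_config A (final_config A c u) w"
  by (induction u arbitrary: c) auto

lemma length_run[simp]: "length (run A c z) = Suc (length z)"
  by (induction z arbitrary: c) auto

lemma run_nth: "i \<le> length z \<Longrightarrow> run A c z ! i = final_config A c (take i z)"
proof (induction z arbitrary: c i)
  case Nil then show ?case by simp
next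
  case (Cons a z)
  then show ?case by (cases i) auto
qed

lemma fc_lin:
  "fst (final_config A (x,p,n) w) = x v* mat_of A p n w \<and>
   snd (final_config A (x,p,n) w) = snd (final_config A (y,p,n) w)"
proof (induction w arbitrary: x y p n)
  case Nil then show ?case by simp
next
  case (Cons a w)
  show ?case using Cons[where x="x v* Delta A a (sgn_nat n)" and y="y v* Delta A a (sgn_nat n)"]
    by (simp add: step_def Let_def vector_matrix_mul_assoc)
qed

lemma smult_vm: "(c *s x) v* M = c *s (x v* M)"
  by (simp add: vector_matrix_mult_def vec_eq_iff sum_distrib_left mult_ac)

lemma span_vm:
  assumes "vec.subspace V" "\<And>y. y \<in> T \<Longrightarrow> y v* M \<in> V" "x \<in> vec.span T"
  shows "x v* M \<in> V"
  using assms(3)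
proof (induction rule: vec.span_induct_alt)
  case base then show ?case using assms(1) by (simp add: vec.subspace_0)
next
  case (step c x y)
  have "(c *s x + y) v* M = c *s (x v* M) + y v* M"
    by (simp add: vector_matrix_left_distrib smult_vm)
  then show ?case using step assms(1,2) by (simp add: vec.subspace_add vec.subspace_scale)
qed

theorem mainTheorem9:
  fixes A :: "('c::finite, 'a::finite, 'q::finite, 'f::field) wodca"
    and c :: "('f, 'q, 'c) config"
    and V :: "('f ^ 'q) set" and S :: "'c set" and X :: "nat set"
    and z :: "'a list" and t :: nat
  assumes "wf_wodca A"
    and "vec.subspace V"
    and "minimal_witness A c V S X z"
    and "card (counter_values A c z) = t"
  shows "length z \<le> t * (CARD('q) * CARD('c))"
proof -
  define m where "m = length z"
  define cfg where "cfg i = run A c z ! i" for i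
  define I where "I pn = {i. i \<le> m \<and> snd (cfg i) = pn}" for pn
  have wit: "witness A c V S X z" and mini: "\<And>z'. length z' < m \<Longrightarrow> \<not> witness A c V S X z'"
    using assms(3) unfolding minimal_witness_def m_def by auto
  have cfg_fc: "cfg i = final_config A c (take i z)" if "i \<le> m" for i
    using that run_nth unfolding cfg_def m_def by blast
  have key: "fst (cfg k) \<notin> vec.span ((\<lambda>i. fst (cfg i)) ` (I pn \<inter> {..<k}))"
    if k: "k \<in> I pn" for k pn
  proof
    assume sp: "fst (cfg k) \<in> vec.span ((\<lambda>i. fst (cfg i)) ` (I pn \<inter> {..<k}))"
    obtain p n where pn: "pn = (p, n)" by (cases pn)
    define w where "w = drop k z"
    define M where "M = mat_of A p n w"
    have km: "k \<le> m" and ck: "snd (cfg k) = (p,n)" using k pn unfolding I_def by auto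
    have fz: "final_config A c z = final_config A (cfg k) w"
      using fc_append[of A c "take k z" w] cfg_fc[OF km] unfolding w_def by simp
    obtain x where xk: "cfg k = (x, p, n)" using ck by (metis prod.collapse)
    have fin: "final_config A c z = (x v* M, snd (final_config A (x,p,n) w))"
      using fz fc_lin[of A x p n w] unfolding xk M_def by (metis prod.collapse)
    have notV: "x v* M \<notin> V" and inS: "fst (snd (final_config A (x,p,n) w)) \<in> S"
      and inX: "snd (snd (final_config A (x,p,n) w)) \<in> X"
      using wit fin unfolding witness_def by (auto split: prod.splits)
    have "y v* M \<in> V" if yin: "y \<in> (\<lambda>i. fst (cfg i)) ` (I pn \<inter> {..<k})" for y
    proof -
      obtain j where j: "j \<in> I pn" "j < k" and yj: "y = fst (cfg j)" using yin by auto
      have jm: "j \<le> m" and cj: "snd (cfg j) = (p,n)" using j pn unfolding I_def by auto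
      have cj': "cfg j = (y, p, n)" using cj yj by (metis prod.collapse)
      define z' where "z' = take j z @ w"
      have "length z' < m" using j km unfolding z'_def w_def m_def by auto
      hence nw: "\<not> witness A c V S X z'" by (rule mini)
      have "final_config A c z' = final_config A (y,p,n) w"
        unfolding z'_def fc_append using cfg_fc[OF jm] cj' by simp
      also have "\<dots> = (y v* M, snd (final_config A (x,p,n) w))"
        using fc_lin[of A y p n w x] unfolding M_def by (metis prod.collapse)
      finally show ?thesis using nw inS inX unfolding witness_def by auto
    qed
    then have "x v* M \<in> V" using span_vm[OF assms(2) _ sp] xk by auto
    with notV show False by simp
  qed
  have indep: "vec.independent ((\<lambda>i. fst (cfg i)) ` (I pn \<inter> {..<k})) \<and>
               inj_on (\<lambda>i. fst (cfg i)) (I pn \<inter> {..<k})" for pn k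
  proof (induction k)
    case 0 then show ?case by (simp add: vec.independent_empty)
  next
    case (Suc k)
    show ?case
    proof (cases "k \<in> I pn")
      case False
      then have eq: "I pn \<inter> {..<Suc k} = I pn \<inter> {..<k}" by (auto simp: less_Suc_eq)
      show ?thesis unfolding eq by (rule Suc.IH)
    next
      case True
      then have e: "I pn \<inter> {..<Suc k} = insert k (I pn \<inter> {..<k})" by (auto simp: less_Suc_eq)
      have nk: "fst (cfg k) \<notin> vec.span ((\<lambda>i. fst (cfg i)) ` (I pn \<inter> {..<k}))"
        using key[OF True] .
      hence "fst (cfg k) \<notin> (\<lambda>i. fst (cfg i)) ` (I pn \<inter> {..<k})"
        using vec.span_base[of "fst (cfg k)" "(\<lambda>i. fst (cfg i)) ` (I pn \<inter> {..<k})"] by argo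
      hence "inj_on (\<lambda>i. fst (cfg i)) (insert k (I pn \<inter> {..<k}))"
        using Suc by (simp only: inj_on_insert) simp
      moreover have "vec.independent (insert (fst (cfg k)) ((\<lambda>i. fst (cfg i)) ` (I pn \<inter> {..<k})))"
        using Suc nk by (intro vec.independent_insertI) auto
      ultimately show ?thesis unfolding e image_insert by (intro conjI)
    qed
  qed
  have cardI: "card (I pn) \<le> CARD('q)" for pn
  proof -
    have e: "I pn \<inter> {..<Suc m} = I pn" unfolding I_def by auto
    have ind: "vec.independent ((\<lambda>i. fst (cfg i)) ` I pn)" and inj: "inj_on (\<lambda>i. fst (cfg i)) (I pn)"
      using indep[of pn "Suc m"] unfolding e by auto
    have "card (I pn) = card ((\<lambda>i. fst (cfg i)) ` I pn)"
      using inj by (rule card_image[symmetric])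
    also have "\<dots> \<le> vec.dim (UNIV :: ('f^'q) set)"
      by (rule vec.independent_card_le_dim[OF _ ind]) simp
    finally show ?thesis by (simp only: vec_dim_card)
  qed
  define P where "P = (UNIV :: 'c set) \<times> counter_values A c z"
  have finCV: "finite (counter_values A c z)" unfolding counter_values_def by simp
  have cov: "{..m} \<subseteq> (\<Union>pn\<in>P. I pn)"
  proof
    fix i assume "i \<in> {..m}"
    hence im: "i \<le> m" by simp
    have "i < length (run A c z)" using im unfolding m_def by simp
    hence ci: "cfg i \<in> set (run A c z)" unfolding cfg_def by (rule nth_mem)
    have "(\<lambda>(x, p, n). n) (cfg i) = snd (snd (cfg i))" by (simp add: split_def)
    hence "snd (snd (cfg i)) \<in> counter_values A c z"
      unfolding counter_values_def using ci by (metis image_eqI)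
    hence "snd (cfg i) \<in> P" unfolding P_def by (cases "snd (cfg i)") auto
    moreover have "i \<in> I (snd (cfg i))" unfolding I_def using im by simp
    ultimately show "i \<in> (\<Union>pn\<in>P. I pn)" by blast
  qed
  have finI: "finite (I pn)" for pn
    by (rule finite_subset[of _ "{..m}"]) (auto simp: I_def)
  have finP: "finite P" unfolding P_def using finCV by simp
  have finU: "finite (\<Union>pn\<in>P. I pn)" using finI finP by blast
  have "Suc m = card {..m}" by simp
  also have "\<dots> \<le> card (\<Union>pn\<in>P. I pn)"
    using cov finU by (intro card_mono)
  also have "\<dots> \<le> (\<Sum>pn\<in>P. card (I pn))" by (rule card_UN_le) (rule finP)
  also have "\<dots> \<le> card P * CARD('q)" using sum_bounded_above[of P "\<lambda>pn. card (I pn)" "CARD('q)"] cardI by simp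
  also have "card P = CARD('c) * t" unfolding P_def using assms(4) by (simp add: card_cartesian_product)
  finally show ?thesis unfolding m_def by (simp add: mult_ac)
qed

end
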